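(* Let $m\ge1$, $\boldsymbol\gamma=(\gamma_1,\ldots,\gamma_m)\in\mathbb{N}^m$ and $f_1,\ldots,f_{m+1}$ arithmetic functions. For $1\le j\le m+1$ and fixed $n_1,\ldots,n_{j-1},n_{j+1},\ldots,n_{m+1}\in\mathbb{N}$ put \[ \Phi_j(s):=\sum_{n_j=1}^\infty S^{\boldsymbol\gamma}_{f_1,\ldots,f_{m+1}}(n_1,\ldots,n_{m+1})\,n_j^{-s}. \] (i) For $\Re(s)>\sigma(f_1)$, \[ \Phi_1(s)=L(s;f_1)\,F_1(n_2),\qquad F_1:=\delta^{-s}\bigl(G_2*_{\gamma_1}\delta^s\bigr),\quad G_2:=S^{(\gamma_2,\ldots,\gamma_m)}_{f_2,\ldots,f_{m+1}}(\,\cdot\,,n_3,\ldots,n_{m+1}), \] i.e. $F_1(n_2)=\sum_{d\in\mathbb{N},\,d^{\gamma_1}\mid n_2}G_2(d^{\gamma_1})\,d^{-\gamma_1 s}$. (ii) For $2\le j\le m+1$ and $\Re(s)>1$, \[ \Phi_j(s)=\zeta(s)\,S^{(\gamma_1,\ldots,\gamma_{j-2})}_{f_1,\ldots,f_{j-2},F_j}(n_1,\ldots,n_{j-1}), \] where $F_j:=\delta^{-s}\bigl(G_j*_{\gamma_{j-1}}(\delta^sf_{j-1})\bigr)$ and $G_j:=S^{(\gamma_j,\ldots,\gamma_m)}_{f_j,\ldots,f_{m+1}}(\,\cdot\,,n_{j+1},\ldots,n_{m+1})$.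
   Context: An arithmetic function is a map $f:\mathbb{N}\to\mathbb{C}$, with $f(x)=0$ for $x\notin\mathbb{N}$; products $gh$ of arithmetic functions are pointwise, and $\delta^x(n):=n^x$ for $x\in\mathbb{C}$. $L(s;f)=\sum_{n\ge1}f(n)n^{-s}$, $\sigma(f)$ its abscissa of absolute convergence, $\zeta$ the Riemann zeta function. For $\gamma\in\mathbb{N}$ and arithmetic functions $g,h$, $(g*_\gamma h)(n):=\sum_{d\in\mathbb{N},\,d^\gamma\mid n}h(n/d^\gamma)\,g(d^\gamma)$. For $k\ge0$, $(\gamma_1,\ldots,\gamma_k)\in\mathbb{N}^k$ and arithmetic functions $g_1,\ldots,g_{k+1}$, \[ S^{(\gamma_1,\ldots,\gamma_k)}_{g_1,\ldots,g_{k+1}}(n_1,\ldots,n_{k+1}):=\sum_{\substack{(d_1,\ldots,d_k)\in\mathbb{N}^k\\ d_i^{\gamma_i}\mid\gcd(n_1,\ldots,n_{i+1})\ (1\le i\le k)}} g_1\Bigl(\frac{n_1}{d_1^{\gamma_1}}\Bigr)g_2\Bigl(\frac{d_1^{\gamma_1}}{d_2^{\gamma_2}}\Bigr)\cdots g_k\Bigl(\frac{d_{k-1}^{\gamma_{k-1}}}{d_k^{\gamma_k}}\Bigr)g_{k+1}\bigl(d_k^{\gamma_k}\bigr), \] with the convention that for $k=0$ (empty parameter list) $S_{g_1}(n_1)=g_1(n_1)$. In (i) and (ii), $G_j$ denotes the arithmetic function $x\mapsto S^{(\gamma_j,\ldots,\gamma_m)}_{f_j,\ldots,f_{m+1}}(x,n_{j+1},\ldots,n_{m+1})$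 (for $j=m+1$ this is $f_{m+1}$), and $F_j$ depends on $s$. *)

theory Defs
  imports "HOL-Analysis.Analysis"
begin

text \<open>Arithmetic functions are modelled as functions nat => complex; only their
values at positive arguments are ever used.\<close>

text \<open>Evaluation of g at the (possibly non-integral) quotient a/b, with the
convention that an arithmetic function vanishes off the positive integers.\<close>
definition qev :: "(nat \<Rightarrow> complex) \<Rightarrow> nat \<Rightarrow> nat \<Rightarrow> complex" where
  "qev g a b = (if b dvd a then g (a div b) else 0)"

definition gconv :: "nat \<Rightarrow> (nat \<Rightarrow> complex) \<Rightarrow> (nat \<Rightarrow> complex) \<Rightarrow> nat \<Rightarrow> complex" where
  "gconv \<gamma> g h n = (\<Sum>d\<in>{d. 1 \<le> d \<and> d ^ \<gamma> dvd n}. h (n div d ^ \<gamma>) * g (d ^ \<gamma>))"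

text \<open>The multiple sum S^{(gs)}_{fs}(ns), with 0-indexed lists:
 gs = [gamma_1..gamma_k], fs = [g_1..g_{k+1}], ns = [n_1..n_{k+1}],
 summation tuple ds = [d_1..d_k] with d_i^{gamma_i} dividing n_1,...,n_{i+1}.\<close>
definition Ssum :: "nat list \<Rightarrow> (nat \<Rightarrow> complex) list \<Rightarrow> nat list \<Rightarrow> complex" where
  "Ssum gs fs ns =
     (\<Sum>ds\<in>{ds. length ds = length gs \<and>
               (\<forall>i<length gs. 1 \<le> ds ! i \<and> (\<forall>l\<le>Suc i. ds ! i ^ (gs ! i) dvd ns ! l))}.
        (let e = (\<lambda>i. if i = 0 then ns ! 0 else ds ! (i - 1) ^ (gs ! (i - 1)))
         in (\<Prod>i<length gs. qev (fs ! i) (e i) (e (Suc i))) * (fs ! length gs) (e (length gs))))"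

definition Lser :: "complex \<Rightarrow> (nat \<Rightarrow> complex) \<Rightarrow> complex" where
  "Lser s f = (\<Sum>n. f (Suc n) * of_nat (Suc n) powr (- s))"

definition abs_abscissa :: "(nat \<Rightarrow> complex) \<Rightarrow> ereal" where
  "abs_abscissa f = Inf {ereal x | x. summable (\<lambda>n. norm (f (Suc n)) * real (Suc n) powr (- x))}"

text \<open>Riemann zeta function on the half-plane Re s > 1 (the only place it is used).\<close>
definition zeta :: "complex \<Rightarrow> complex" where
  "zeta s = (\<Sum>n. of_nat (Suc n) powr (- s))"

end

theory Submission imports Defs begin

definition eS :: "nat list \<Rightarrow> nat list \<Rightarrow> nat list \<Rightarrow> nat \<Rightarrow> nat" where
  "eS gs ns ds i = (if i = 0 then ns ! 0 else ds ! (i - 1) ^ (gs ! (i - 1)))"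

definition tS :: "nat list \<Rightarrow> (nat \<Rightarrow> complex) list \<Rightarrow> nat list \<Rightarrow> nat list \<Rightarrow> complex" where
  "tS gs fs ns ds = (\<Prod>i<length gs. qev (fs ! i) (eS gs ns ds i) (eS gs ns ds (Suc i))) *
      (fs ! length gs) (eS gs ns ds (length gs))"

definition AS :: "nat list \<Rightarrow> nat list \<Rightarrow> nat list set" where
  "AS gs ns = {ds. length ds = length gs \<and>
               (\<forall>i<length gs. 1 \<le> ds ! i \<and> (\<forall>l\<le>Suc i. ds ! i ^ (gs ! i) dvd ns ! l))}"

lemma Ssum_alt: "Ssum gs fs ns = sum (tS gs fs ns) (AS gs ns)"
  unfolding Ssum_def tS_def AS_def eS_def Let_def by simp

lemma AS_finite:
  assumes "1 \<le> ns ! 0" "\<forall>i<length gs. 1 \<le> gs ! i"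
  shows "finite (AS gs ns)"
proof -
  have "AS gs ns \<subseteq> {ds. set ds \<subseteq> {..ns ! 0} \<and> length ds = length gs}"
  proof
    fix ds assume ds: "ds \<in> AS gs ns"
    have "x \<le> ns ! 0" if "x \<in> set ds" for x
    proof -
      from that obtain i where i: "i < length ds" "x = ds ! i" by (auto simp: in_set_conv_nth)
      with ds have "x ^ (gs ! i) dvd ns ! 0" "1 \<le> x" "1 \<le> gs ! i" using assms by (auto simp: AS_def)
      hence "x ^ (gs ! i) \<le> ns ! 0" using assms(1) by (intro dvd_imp_le) auto
      moreover have "x \<le> x ^ (gs ! i)" using \<open>1 \<le> x\<close> \<open>1 \<le> gs ! i\<close>
        by (metis One_nat_def Suc_le_eq power_increasing power_one_right)
      ultimately show ?thesis by simp
    qed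
    thus "ds \<in> {ds. set ds \<subseteq> {..ns ! 0} \<and> length ds = length gs}" using ds by (auto simp: AS_def)
  qed
  moreover have "finite {ds. set ds \<subseteq> {..ns ! 0} \<and> length ds = length gs}"
    by (rule finite_lists_length_eq) auto
  ultimately show ?thesis by (rule finite_subset)
qed

lemma Ssum_nil: "Ssum [] [f] [n] = f n"
proof -
  have "AS [] [n] = {[]}" by (auto simp: AS_def)
  thus ?thesis by (simp add: Ssum_alt tS_def eS_def)
qed

lemma tS_zero:
  assumes "t < length gs" "\<not> eS gs ns ds (Suc t) dvd eS gs ns ds t"
  shows "tS gs fs ns ds = 0"
proof -
  have "(\<Prod>i<length gs. qev (fs ! i) (eS gs ns ds i) (eS gs ns ds (Suc i))) = 0"
    using assms by (intro prod_zero) (auto simp: qev_def intro!: bexI[of _ t])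
  thus ?thesis by (simp add: tS_def)
qed

lemma eS_chain:
  "(\<forall>t\<le>i. eS gs ns ds (Suc t) dvd eS gs ns ds t) \<Longrightarrow> eS gs ns ds (Suc i) dvd eS gs ns ds 0"
proof (induction i)
  case 0 thus ?case by simp
next
  case (Suc i)
  thus ?case by (meson dvd_trans le_SucI order_refl)
qed

lemma R1:
  assumes "1 \<le> n0" "1 \<le> g" "\<forall>i<length gs. 1 \<le> gs ! i"
  shows "Ssum (g # gs) (f # fs) (n0 # n1 # rest) =
    (\<Sum>d\<in>{d. 1 \<le> d \<and> d ^ g dvd n0 \<and> d ^ g dvd n1}. qev f n0 (d ^ g) * Ssum gs fs (d ^ g # rest))"
proof -
  define G where "G = g # gs"
  define F where "F = f # fs"
  define N where "N = n0 # n1 # rest"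
  define D where "D = {d. 1 \<le> d \<and> d ^ g dvd n0 \<and> d ^ g dvd n1}"
  define A' where "A' d = AS gs (d ^ g # rest)" for d
  have eq_e: "eS G N (d # ds) (Suc i) = eS gs (d ^ g # rest) ds i" for d ds i
    by (cases i) (auto simp: eS_def G_def N_def)
  have fact: "tS G F N (d # ds) = qev f n0 (d ^ g) * tS gs fs (d ^ g # rest) ds" for d ds
  proof -
    have e0: "eS G N (d # ds) 0 = n0" by (simp add: eS_def N_def)
    have e0': "eS gs (d ^ g # rest) ds 0 = d ^ g" by (simp add: eS_def)
    have lG: "length G = Suc (length gs)" by (simp add: G_def)
    have "(\<Prod>i<Suc (length gs). qev (F ! i) (eS G N (d # ds) i) (eS G N (d # ds) (Suc i))) =
      qev f n0 (d ^ g) * (\<Prod>i<length gs. qev (fs ! i) (eS gs (d ^ g # rest) ds i) (eS gs (d ^ g # rest) ds (Suc i)))"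
      by (subst prod.lessThan_Suc_shift) (simp add: eq_e e0 e0' F_def del: prod.lessThan_Suc)
    moreover have "(F ! length G) (eS G N (d # ds) (length G)) = (fs ! length gs) (eS gs (d ^ g # rest) ds (length gs))"
      by (simp add: lG F_def eq_e)
    ultimately show ?thesis unfolding tS_def lG by (simp add: mult.assoc)
  qed
  have finD: "finite D"
  proof (rule finite_subset)
    show "D \<subseteq> {..n0}"
    proof
      fix d assume "d \<in> D"
      hence "d ^ g dvd n0" "1 \<le> d" by (auto simp: D_def)
      hence "d ^ g \<le> n0" using assms(1) by (intro dvd_imp_le) auto
      moreover have "d \<le> d ^ g" using \<open>1 \<le> d\<close> assms(2)
        by (metis One_nat_def Suc_le_eq power_increasing power_one_right)
      ultimately show "d \<in> {..n0}" by simp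
    qed
  qed auto
  have finA': "finite (A' d)" if "d \<in> D" for d
    unfolding A'_def using that assms(3) by (intro AS_finite) (auto simp: D_def)
  have finA: "finite (AS G N)"
    using assms by (intro AS_finite) (auto simp: G_def N_def nth_Cons split: nat.splits)
  define B where "B = (\<lambda>(d, ds). d # ds) ` (SIGMA d:D. A' d)"
  have BA: "B \<subseteq> AS G N"
  proof
    fix x assume "x \<in> B"
    then obtain d ds where x: "x = d # ds" and d: "d \<in> D" and ds: "ds \<in> A' d"
      by (auto simp: B_def)
    have "1 \<le> x ! i \<and> (\<forall>l\<le>Suc i. x ! i ^ (G ! i) dvd N ! l)" if "i < length G" for i
    proof (cases i)
      case 0
      thus ?thesis using d by (auto simp: x D_def G_def N_def le_Suc_eq)
    next
      case (Suc i')
      with that have i': "i' < length gs" by (simp add: G_def)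
      with ds have h1: "1 \<le> ds ! i'" and h2: "\<forall>l\<le>Suc i'. ds ! i' ^ (gs ! i') dvd (d ^ g # rest) ! l"
        by (auto simp: A'_def AS_def)
      have "ds ! i' ^ (gs ! i') dvd N ! l" if "l \<le> Suc (Suc i')" for l
      proof (cases l)
        case 0
        have "ds ! i' ^ (gs ! i') dvd d ^ g" using h2 by auto
        thus ?thesis using d 0 by (auto simp: D_def N_def intro: dvd_trans)
      next
        case (Suc l')
        show ?thesis
        proof (cases l')
          case 0
          have "ds ! i' ^ (gs ! i') dvd d ^ g" using h2 by auto
          thus ?thesis using d 0 Suc by (auto simp: D_def N_def intro: dvd_trans)
        next
          case (Suc l'')
          with h2 \<open>l = Suc l'\<close> that show ?thesis by (auto simp: N_def)
        qed
      qed
      thus ?thesis using h1 Suc by (auto simp: x G_def)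
    qed
    moreover have "length x = length G" using ds by (auto simp: x G_def A'_def AS_def)
    ultimately show "x \<in> AS G N" by (auto simp: AS_def)
  qed
  have Z: "tS G F N x = 0" if "x \<in> AS G N - B" for x
  proof -
    from that have xA: "x \<in> AS G N" and xB: "x \<notin> B" by auto
    hence "length x = Suc (length gs)" by (auto simp: AS_def G_def)
    then obtain d ds where x: "x = d # ds" and len: "length ds = length gs" by (cases x) auto
    have "1 \<le> x ! 0 \<and> (\<forall>l\<le>Suc 0. x ! 0 ^ (G ! 0) dvd N ! l)" using xA by (auto simp: AS_def G_def)
    hence d: "d \<in> D" by (auto simp: x D_def G_def N_def)
    with xB have "ds \<notin> A' d" by (auto simp: B_def x)
    then obtain i where i: "i < length gs" and
      bad: "\<not> (1 \<le> ds ! i \<and> (\<forall>l\<le>Suc i. ds ! i ^ (gs ! i) dvd (d ^ g # rest) ! l))"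
      using len by (auto simp: A'_def AS_def)
    have good: "1 \<le> ds ! i \<and> (\<forall>l\<le>Suc (Suc i). ds ! i ^ (gs ! i) dvd N ! l)"
      using xA i by (auto simp: AS_def x G_def)
    have "\<not> ds ! i ^ (gs ! i) dvd d ^ g"
    proof
      assume h: "ds ! i ^ (gs ! i) dvd d ^ g"
      have "ds ! i ^ (gs ! i) dvd (d ^ g # rest) ! l" if "l \<le> Suc i" for l
      proof (cases l)
        case 0 thus ?thesis using h by simp
      next
        case (Suc l')
        with good that have "ds ! i ^ (gs ! i) dvd N ! (Suc (Suc l'))" by auto
        thus ?thesis using Suc by (simp add: N_def)
      qed
      with bad good show False by auto
    qed
    hence "\<not> eS gs (d ^ g # rest) ds (Suc i) dvd eS gs (d ^ g # rest) ds 0"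
      by (simp add: eS_def)
    then obtain t where "t \<le> i" "\<not> eS gs (d ^ g # rest) ds (Suc t) dvd eS gs (d ^ g # rest) ds t"
      using eS_chain by blast
    hence "tS gs fs (d ^ g # rest) ds = 0" using i by (intro tS_zero[of t]) auto
    thus ?thesis by (simp add: x fact)
  qed
  have "Ssum G F N = sum (tS G F N) B"
    unfolding Ssum_alt using finA BA Z by (intro sum.mono_neutral_right) auto
  also have "\<dots> = sum (\<lambda>(d, ds). tS G F N (d # ds)) (SIGMA d:D. A' d)"
    unfolding B_def by (subst sum.reindex) (auto simp: inj_on_def intro!: sum.cong)
  also have "\<dots> = (\<Sum>d\<in>D. \<Sum>ds\<in>A' d. tS G F N (d # ds))"
    using finD finA' by (subst sum.Sigma) auto
  also have "\<dots> = (\<Sum>d\<in>D. qev f n0 (d ^ g) * Ssum gs fs (d ^ g # rest))"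
    by (simp add: fact sum_distrib_left Ssum_alt A'_def)
  finally show ?thesis by (simp add: G_def F_def N_def D_def)
qed



lemma dilate_sums:
  fixes a :: "nat \<Rightarrow> complex"
  assumes e: "1 \<le> e" and a: "(\<lambda>n. a (Suc n)) sums L"
  shows "(\<lambda>n. if e dvd Suc n then a (Suc n div e) else 0) sums L"
proof -
  define h where "h n = (if e dvd Suc n then a (Suc n div e) else 0)" for n
  define g where "g n = e * n + (e - 1)" for n
  have sm: "strict_mono g" unfolding strict_mono_def
  proof (intro allI impI)
    fix x y :: nat assume "x < y"
    hence "e * x < e * y" using e by simp
    thus "g x < g y" unfolding g_def by linarith
  qed
  have hg: "h (g n) = a (Suc n)" for n
  proof -
    have "Suc (g n) = e * Suc n" using e by (simp add: g_def algebra_simps)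
    thus ?thesis using e by (simp add: h_def)
  qed
  have zero: "h n = 0" if "n \<notin> range g" for n
  proof (rule ccontr)
    assume "h n \<noteq> 0"
    hence "e dvd Suc n" by (auto simp: h_def split: if_splits)
    then obtain q where q: "Suc n = e * q" by auto
    hence "q \<ge> 1" by (cases q) auto
    hence "g (q - 1) = n" using q e
      by (cases q) (auto simp: g_def algebra_simps)
    with that show False by auto
  qed
  have "(\<lambda>n. h (g n)) sums L" using a by (simp add: hg)
  hence "h sums L" using sums_mono_reindex[OF sm, of h] zero by blast
  thus ?thesis by (simp add: h_def[abs_def])
qed

lemma zeta_sums:
  assumes "1 < Re s"
  shows "(\<lambda>n. of_nat (Suc n) powr (- s)) sums zeta s"
proof -
  have "summable (\<lambda>n. real n powr (- Re s))" using assms by (subst summable_real_powr_iff) auto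
  hence "summable (\<lambda>n. real (Suc n) powr (- Re s))" by (subst summable_Suc_iff)
  moreover have "norm (of_nat (Suc n) powr (- s) :: complex) = real (Suc n) powr (- Re s)" for n
    by (subst norm_powr_real_powr) auto
  ultimately have "summable (\<lambda>n. norm (of_nat (Suc n) powr (- s) :: complex))" by simp
  hence "summable (\<lambda>n. of_nat (Suc n) powr (- s) :: complex)" by (rule summable_norm_cancel)
  thus ?thesis unfolding zeta_def by (rule summable_sums)
qed

lemma L_sums:
  assumes "ereal (Re s) > abs_abscissa f"
  shows "(\<lambda>n. f (Suc n) * of_nat (Suc n) powr (- s)) sums Lser s f"
proof -
  from assms obtain y where y: "y \<in> {ereal x | x. summable (\<lambda>n. norm (f (Suc n)) * real (Suc n) powr (- x))}"
    "y < ereal (Re s)"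
    unfolding abs_abscissa_def by (auto simp: Inf_less_iff)
  then obtain x where x: "summable (\<lambda>n. norm (f (Suc n)) * real (Suc n) powr (- x))" "x < Re s" by auto
  have "norm (f (Suc n) * of_nat (Suc n) powr (- s)) \<le> norm (f (Suc n)) * real (Suc n) powr (- x)" for n
  proof -
    have "norm (f (Suc n) * of_nat (Suc n) powr (- s)) = norm (f (Suc n)) * real (Suc n) powr (- Re s)"
      by (simp add: norm_mult norm_powr_real_powr)
    also have "\<dots> \<le> norm (f (Suc n)) * real (Suc n) powr (- x)"
      using x(2) by (intro mult_left_mono powr_mono) auto
    finally show ?thesis .
  qed
  hence "summable (\<lambda>n. f (Suc n) * of_nat (Suc n) powr (- s))"
    by (intro summable_comparison_test[OF _ x(1)]) auto
  thus ?thesis unfolding Lser_def by (rule summable_sums)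
qed

lemma powr_nat_mult: "(of_nat (a * b) :: complex) powr z = of_nat a powr z * of_nat b powr z"
  by (simp add: powr_times_real)

lemma powr_nat_cancel: "1 \<le> q \<Longrightarrow> (of_nat q :: complex) powr (- s) * of_nat q powr s = 1"
  by (simp add: powr_minus)

lemma powr_div_eq:
  assumes "e dvd n" "1 \<le> n"
  shows "(of_nat n :: complex) powr (- s) * of_nat (n div e) powr s = of_nat e powr (- s)"
proof -
  from assms obtain q where q: "n = e * q" by auto
  have "1 \<le> q" using q assms(2) by (cases q) auto
  have "1 \<le> e" using q assms(2) by (cases e) auto
  hence "n div e = q" using q by simp
  have "(of_nat n :: complex) powr (- s) * of_nat (n div e) powr s =
      (of_nat e powr (- s) * of_nat q powr (- s)) * of_nat q powr s"
    by (subst \<open>n div e = q\<close>, subst q, subst powr_nat_mult, rule refl)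
  also have "\<dots> = of_nat e powr (- s) * (of_nat q powr (- s) * of_nat q powr s)"
    by (rule mult.assoc)
  also have "\<dots> = of_nat e powr (- s)" using \<open>1 \<le> q\<close> powr_nat_cancel[of q s] by simp
  finally show ?thesis .
qed

lemma dvd_set_finite:
  fixes n g :: nat
  assumes "1 \<le> n" "1 \<le> g"
  shows "finite {d. 1 \<le> d \<and> d ^ g dvd n \<and> P d}"
proof (rule finite_subset)
  show "{d. 1 \<le> d \<and> d ^ g dvd n \<and> P d} \<subseteq> {..n}"
  proof
    fix d assume "d \<in> {d. 1 \<le> d \<and> d ^ g dvd n \<and> P d}"
    hence "d ^ g dvd n" "1 \<le> d" by auto
    hence "d ^ g \<le> n" using assms(1) by (intro dvd_imp_le) auto
    moreover have "d \<le> d ^ g" using \<open>1 \<le> d\<close> assms(2)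
      by (metis One_nat_def Suc_le_eq power_increasing power_one_right)
    ultimately show "d \<in> {..n}" by simp
  qed
qed auto



lemma part1:
  fixes g :: nat and gs :: "nat list" and f :: "nat \<Rightarrow> complex" and fs :: "(nat \<Rightarrow> complex) list"
    and n1 :: nat and rest :: "nat list" and s :: complex
  assumes g: "1 \<le> g" and gs: "\<forall>i<length gs. 1 \<le> gs ! i" and n1: "1 \<le> n1"
    and ab: "ereal (Re s) > abs_abscissa f"
  shows "(\<lambda>n. Ssum (g # gs) (f # fs) (Suc n # n1 # rest) * of_nat (Suc n) powr (- s)) sums
     (Lser s f * (of_nat n1 powr (- s) * gconv g (\<lambda>x. Ssum gs fs (x # rest)) (\<lambda>y. of_nat y powr s) n1))"
proof -
  define G where "G x = Ssum gs fs (x # rest)" for x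
  define D where "D = {d. 1 \<le> d \<and> d ^ g dvd n1}"
  have finD: "finite D" unfolding D_def using dvd_set_finite[OF n1 g, of "\<lambda>_. True"] by simp
  define X where "X d n = (if d ^ g dvd Suc n then f (Suc n div d ^ g) * of_nat (Suc n) powr (- s) else 0) * G (d ^ g)" for d n
  have eq: "Ssum (g # gs) (f # fs) (Suc n # n1 # rest) * of_nat (Suc n) powr (- s) = (\<Sum>d\<in>D. X d n)" for n
  proof -
    have "Ssum (g # gs) (f # fs) (Suc n # n1 # rest) =
        (\<Sum>d\<in>{d. 1 \<le> d \<and> d ^ g dvd Suc n \<and> d ^ g dvd n1}. qev f (Suc n) (d ^ g) * G (d ^ g))"
      unfolding G_def by (rule R1) (use g gs in auto)
    also have "{d. 1 \<le> d \<and> d ^ g dvd Suc n \<and> d ^ g dvd n1} = {d\<in>D. d ^ g dvd Suc n}" by (auto simp: D_def)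
    also have "(\<Sum>d\<in>{d\<in>D. d ^ g dvd Suc n}. qev f (Suc n) (d ^ g) * G (d ^ g)) =
        (\<Sum>d\<in>D. if d ^ g dvd Suc n then qev f (Suc n) (d ^ g) * G (d ^ g) else 0)"
      by (rule sum.inter_filter[OF finD])
    finally show ?thesis by (auto simp add: sum_distrib_right X_def qev_def intro!: sum.cong)
  qed
  have each: "X d sums (of_nat (d ^ g) powr (- s) * Lser s f * G (d ^ g))" if "d \<in> D" for d
  proof -
    define e where "e = d ^ g"
    have e1: "1 \<le> e" using that by (auto simp: D_def e_def)
    define a where "a k = f k * of_nat (e * k) powr (- s)" for k
    have "(\<lambda>n. a (Suc n)) sums (of_nat e powr (- s) * Lser s f)"
    proof -
      have "(\<lambda>n. of_nat e powr (- s) * (f (Suc n) * of_nat (Suc n) powr (- s))) sums (of_nat e powr (- s) * Lser s f)"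
        by (rule sums_mult[OF L_sums[OF ab]])
      moreover have "a (Suc n) = of_nat e powr (- s) * (f (Suc n) * of_nat (Suc n) powr (- s))" for n
        unfolding a_def by (subst powr_nat_mult) (simp add: mult_ac)
      ultimately show ?thesis by simp
    qed
    from dilate_sums[OF e1 this]
    have "(\<lambda>n. if e dvd Suc n then a (Suc n div e) else 0) sums (of_nat e powr (- s) * Lser s f)" .
    moreover have "(if e dvd Suc n then a (Suc n div e) else 0) =
        (if e dvd Suc n then f (Suc n div e) * of_nat (Suc n) powr (- s) else 0)" for n
      by (auto simp: a_def)
    ultimately have "(\<lambda>n. if e dvd Suc n then f (Suc n div e) * of_nat (Suc n) powr (- s) else 0) sums
        (of_nat e powr (- s) * Lser s f)" by simp
    from sums_mult2[OF this, of "G e"] show ?thesis unfolding e_def X_def[abs_def] .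
  qed
  have "(\<lambda>n. \<Sum>d\<in>D. X d n) sums (\<Sum>d\<in>D. of_nat (d ^ g) powr (- s) * Lser s f * G (d ^ g))"
    by (rule sums_sum) (rule each)
  moreover have "(\<Sum>d\<in>D. of_nat (d ^ g) powr (- s) * Lser s f * G (d ^ g)) =
      Lser s f * (of_nat n1 powr (- s) * gconv g G (\<lambda>y. of_nat y powr s) n1)"
  proof -
    have "of_nat n1 powr (- s) * gconv g G (\<lambda>y. of_nat y powr s) n1 =
        (\<Sum>d\<in>D. of_nat n1 powr (- s) * of_nat (n1 div d ^ g) powr s * G (d ^ g))"
      by (simp add: gconv_def D_def sum_distrib_left mult.assoc)
    also have "\<dots> = (\<Sum>d\<in>D. of_nat (d ^ g) powr (- s) * G (d ^ g))"
      by (rule sum.cong[OF refl], subst powr_div_eq) (use n1 in \<open>auto simp: D_def\<close>)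
    finally show ?thesis by (simp add: sum_distrib_left mult_ac)
  qed
  ultimately have "(\<lambda>n. \<Sum>d\<in>D. X d n) sums (Lser s f * (of_nat n1 powr (- s) * gconv g G (\<lambda>y. of_nat y powr s) n1))"
    by simp
  moreover have "(\<lambda>n. Ssum (g # gs) (f # fs) (Suc n # n1 # rest) * of_nat (Suc n) powr (- s)) = (\<lambda>n. \<Sum>d\<in>D. X d n)"
    using eq by auto
  moreover have "(\<lambda>x. Ssum gs fs (x # rest)) = G" by (simp add: G_def fun_eq_iff)
  ultimately show ?thesis by simp
qed



lemma part2:
  fixes s :: complex
  assumes s: "1 < Re s"
  shows "p < length gs \<Longrightarrow> Suc p < length ns \<Longrightarrow> length fs = Suc (length gs) \<Longrightarrow>
    \<forall>i<length gs. 1 \<le> gs ! i \<Longrightarrow> 1 \<le> ns ! 0 \<Longrightarrow>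
   (\<lambda>n. Ssum gs fs (ns[Suc p := Suc n]) * of_nat (Suc n) powr (- s)) sums
     (zeta s * Ssum (take p gs) (take p fs @
        [\<lambda>x. of_nat x powr (- s) * gconv (gs ! p)
               (\<lambda>x. Ssum (drop (Suc p) gs) (drop (Suc p) fs) (x # drop (Suc (Suc p)) ns))
               (\<lambda>y. of_nat y powr s * (fs ! p) y) x])
        (take (Suc p) ns))"
proof (induction p arbitrary: gs fs ns)
  case 0
  obtain g gs' where gs: "gs = g # gs'" using 0 by (cases gs) auto
  obtain f fs' where fs: "fs = f # fs'" using 0 by (cases fs) auto
  obtain n0 ns1 where ns0: "ns = n0 # ns1" using 0(2) by (cases ns) auto
  obtain n1 rest where ns1: "ns1 = n1 # rest" using 0(2) ns0 by (cases ns1) auto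
  have ns: "ns = n0 # n1 # rest" by (simp add: ns0 ns1)
  have g: "1 \<le> g" and gs': "\<forall>i<length gs'. 1 \<le> gs' ! i" using 0(4) by (auto simp: gs)
  have n0: "1 \<le> n0" using 0(5) by (simp add: ns)
  define G where "G x = Ssum gs' fs' (x # rest)" for x
  define D where "D = {d. 1 \<le> d \<and> d ^ g dvd n0}"
  have finD: "finite D" unfolding D_def using dvd_set_finite[OF n0 g, of "\<lambda>_. True"] by simp
  define X where "X d n = (if d ^ g dvd Suc n then of_nat (Suc n) powr (- s) else 0) * (f (n0 div d ^ g) * G (d ^ g))" for d n
  have eq: "Ssum gs fs (ns[Suc 0 := Suc n]) * of_nat (Suc n) powr (- s) = (\<Sum>d\<in>D. X d n)" for n
  proof -
    have "Ssum gs fs (ns[Suc 0 := Suc n]) = Ssum (g # gs') (f # fs') (n0 # Suc n # rest)"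
      by (simp add: gs fs ns)
    also have "\<dots> = (\<Sum>d\<in>{d. 1 \<le> d \<and> d ^ g dvd n0 \<and> d ^ g dvd Suc n}. qev f n0 (d ^ g) * G (d ^ g))"
      unfolding G_def by (rule R1) (use g gs' n0 in auto)
    also have "{d. 1 \<le> d \<and> d ^ g dvd n0 \<and> d ^ g dvd Suc n} = {d\<in>D. d ^ g dvd Suc n}" by (auto simp: D_def)
    also have "(\<Sum>d\<in>{d\<in>D. d ^ g dvd Suc n}. qev f n0 (d ^ g) * G (d ^ g)) =
        (\<Sum>d\<in>D. if d ^ g dvd Suc n then qev f n0 (d ^ g) * G (d ^ g) else 0)"
      by (rule sum.inter_filter[OF finD])
    finally show ?thesis by (auto simp add: sum_distrib_right X_def qev_def D_def intro!: sum.cong)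
  qed
  have each: "X d sums (of_nat (d ^ g) powr (- s) * zeta s * (f (n0 div d ^ g) * G (d ^ g)))" if "d \<in> D" for d
  proof -
    define e where "e = d ^ g"
    have e1: "1 \<le> e" using that by (auto simp: D_def e_def)
    define a where "a k = (of_nat (e * k) :: complex) powr (- s)" for k
    have "(\<lambda>n. a (Suc n)) sums (of_nat e powr (- s) * zeta s)"
    proof -
      have "(\<lambda>n. of_nat e powr (- s) * (of_nat (Suc n) powr (- s))) sums (of_nat e powr (- s) * zeta s)"
        by (rule sums_mult[OF zeta_sums[OF s]])
      moreover have "a (Suc n) = of_nat e powr (- s) * (of_nat (Suc n) powr (- s))" for n
        unfolding a_def by (subst powr_nat_mult) (rule refl)
      ultimately show ?thesis by simp
    qed
    from dilate_sums[OF e1 this]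
    have "(\<lambda>n. if e dvd Suc n then a (Suc n div e) else 0) sums (of_nat e powr (- s) * zeta s)" .
    moreover have "(if e dvd Suc n then a (Suc n div e) else 0) =
        (if e dvd Suc n then of_nat (Suc n) powr (- s) else 0)" for n
      by (auto simp: a_def)
    ultimately have "(\<lambda>n. if e dvd Suc n then of_nat (Suc n) powr (- s) else 0) sums
        (of_nat e powr (- s) * zeta s)" by simp
    from sums_mult2[OF this, of "f (n0 div e) * G e"] show ?thesis unfolding e_def X_def[abs_def] .
  qed
  have "(\<lambda>n. \<Sum>d\<in>D. X d n) sums (\<Sum>d\<in>D. of_nat (d ^ g) powr (- s) * zeta s * (f (n0 div d ^ g) * G (d ^ g)))"
    by (rule sums_sum) (rule each)
  moreover have "(\<Sum>d\<in>D. of_nat (d ^ g) powr (- s) * zeta s * (f (n0 div d ^ g) * G (d ^ g))) =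
      zeta s * (of_nat n0 powr (- s) * gconv g G (\<lambda>y. of_nat y powr s * f y) n0)"
  proof -
    have "of_nat n0 powr (- s) * gconv g G (\<lambda>y. of_nat y powr s * f y) n0 =
        (\<Sum>d\<in>D. of_nat n0 powr (- s) * of_nat (n0 div d ^ g) powr s * (f (n0 div d ^ g) * G (d ^ g)))"
      by (simp add: gconv_def D_def sum_distrib_left mult.assoc)
    also have "\<dots> = (\<Sum>d\<in>D. of_nat (d ^ g) powr (- s) * (f (n0 div d ^ g) * G (d ^ g)))"
      by (rule sum.cong[OF refl], subst powr_div_eq) (use n0 in \<open>auto simp: D_def\<close>)
    finally show ?thesis by (simp add: sum_distrib_left mult_ac)
  qed
  ultimately have "(\<lambda>n. \<Sum>d\<in>D. X d n) sums (zeta s * (of_nat n0 powr (- s) * gconv g G (\<lambda>y. of_nat y powr s * f y) n0))"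
    by simp
  moreover have "(\<lambda>n. Ssum gs fs (ns[Suc 0 := Suc n]) * of_nat (Suc n) powr (- s)) = (\<lambda>n. \<Sum>d\<in>D. X d n)"
    using eq by auto
  moreover have "(\<lambda>x. Ssum (drop (Suc 0) gs) (drop (Suc 0) fs) (x # drop (Suc (Suc 0)) ns)) = G"
    by (simp add: G_def fun_eq_iff gs fs ns)
  ultimately show ?case by (simp add: Ssum_nil gs fs ns)
next
  case (Suc p)
  obtain g gs' where gs: "gs = g # gs'" using Suc by (cases gs) auto
  obtain f fs' where fs: "fs = f # fs'" using Suc by (cases fs) auto
  obtain n0 ns1 where ns0: "ns = n0 # ns1" using Suc(3) by (cases ns) auto
  obtain n1 rest where ns1: "ns1 = n1 # rest" using Suc(3) ns0 by (cases ns1) auto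
  have ns: "ns = n0 # n1 # rest" by (simp add: ns0 ns1)
  have g: "1 \<le> g" and gs': "\<forall>i<length gs'. 1 \<le> gs' ! i" using Suc(5) by (auto simp: gs)
  have n0: "1 \<le> n0" using Suc(6) by (simp add: ns)
  have p1: "p < length gs'" using Suc(2) by (simp add: gs)
  have p2: "Suc p < length (x # rest)" for x using Suc(3) by (simp add: ns)
  have lf: "length fs' = Suc (length gs')" using Suc(4) by (simp add: gs fs)
  define D where "D = {d. 1 \<le> d \<and> d ^ g dvd n0 \<and> d ^ g dvd n1}"
  define Fj where "Fj = (\<lambda>x. of_nat x powr (- s) * gconv (gs' ! p)
               (\<lambda>x. Ssum (drop (Suc p) gs') (drop (Suc p) fs') (x # drop (Suc p) rest))
               (\<lambda>y. of_nat y powr s * (fs' ! p) y) x)"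
  define T where "T e = Ssum (take p gs') (take p fs' @ [Fj]) (e # take p rest)" for e
  have IH: "(\<lambda>n. Ssum gs' fs' ((d ^ g # rest)[Suc p := Suc n]) * of_nat (Suc n) powr (- s)) sums (zeta s * T (d ^ g))"
    if "d \<in> D" for d
  proof -
    have "1 \<le> d ^ g" using that by (auto simp: D_def)
    from Suc.IH[OF p1 p2 lf gs'] this
    show ?thesis by (simp add: T_def Fj_def)
  qed
  have eq: "Ssum gs fs (ns[Suc (Suc p) := Suc n]) * of_nat (Suc n) powr (- s) =
     (\<Sum>d\<in>D. qev f n0 (d ^ g) * (Ssum gs' fs' ((d ^ g # rest)[Suc p := Suc n]) * of_nat (Suc n) powr (- s)))" for n
  proof -
    have "Ssum gs fs (ns[Suc (Suc p) := Suc n]) = Ssum (g # gs') (f # fs') (n0 # n1 # rest[p := Suc n])"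
      by (simp add: gs fs ns)
    also have "\<dots> = (\<Sum>d\<in>D. qev f n0 (d ^ g) * Ssum gs' fs' (d ^ g # rest[p := Suc n]))"
      unfolding D_def by (rule R1) (use g gs' n0 in auto)
    finally show ?thesis by (simp add: sum_distrib_right mult.assoc)
  qed
  have "(\<lambda>n. \<Sum>d\<in>D. qev f n0 (d ^ g) * (Ssum gs' fs' ((d ^ g # rest)[Suc p := Suc n]) * of_nat (Suc n) powr (- s)))
      sums (\<Sum>d\<in>D. qev f n0 (d ^ g) * (zeta s * T (d ^ g)))"
    by (rule sums_sum, rule sums_mult, rule IH)
  moreover have "(\<Sum>d\<in>D. qev f n0 (d ^ g) * (zeta s * T (d ^ g))) =
      zeta s * Ssum (g # take p gs') (f # (take p fs' @ [Fj])) (n0 # n1 # take p rest)"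
  proof -
    have "Ssum (g # take p gs') (f # (take p fs' @ [Fj])) (n0 # n1 # take p rest) =
        (\<Sum>d\<in>D. qev f n0 (d ^ g) * T (d ^ g))"
      unfolding D_def T_def by (rule R1) (use g gs' n0 in auto)
    thus ?thesis by (simp add: sum_distrib_left mult_ac)
  qed
  moreover have "(\<lambda>n. Ssum gs fs (ns[Suc (Suc p) := Suc n]) * of_nat (Suc n) powr (- s)) =
     (\<lambda>n. \<Sum>d\<in>D. qev f n0 (d ^ g) * (Ssum gs' fs' ((d ^ g # rest)[Suc p := Suc n]) * of_nat (Suc n) powr (- s)))"
    by (rule ext, rule eq)
  ultimately have "(\<lambda>n. Ssum gs fs (ns[Suc (Suc p) := Suc n]) * of_nat (Suc n) powr (- s)) sums
      (zeta s * Ssum (g # take p gs') (f # (take p fs' @ [Fj])) (n0 # n1 # take p rest))"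
    by (simp only:)
  thus ?case by (simp add: gs fs ns Fj_def)
qed

theorem proposition3p1:
  fixes m :: nat and gs :: "nat list" and fs :: "(nat \<Rightarrow> complex) list"
    and ns :: "nat list" and s :: complex
  assumes "1 \<le> m"
    and "length gs = m" and "\<forall>i<m. 1 \<le> gs ! i"
    and "length fs = m + 1"
    and "length ns = m + 1" and "\<forall>i<m + 1. 1 \<le> ns ! i"
  shows
   "(ereal (Re s) > abs_abscissa (fs ! 0) \<longrightarrow>
      (\<lambda>n. Ssum gs fs (ns[0 := Suc n]) * of_nat (Suc n) powr (- s)) sums
        (Lser s (fs ! 0) *
          (let G2 = (\<lambda>x. Ssum (drop 1 gs) (drop 1 fs) (x # drop 2 ns));
               F1 = (\<lambda>x. of_nat x powr (- s) * gconv (gs ! 0) G2 (\<lambda>y. of_nat y powr s) x)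
           in F1 (ns ! 1))))
    \<and>
    (\<forall>j. 2 \<le> j \<and> j \<le> m + 1 \<and> 1 < Re s \<longrightarrow>
      (\<lambda>n. Ssum gs fs (ns[j - 1 := Suc n]) * of_nat (Suc n) powr (- s)) sums
        (zeta s *
          (let Gj = (\<lambda>x. Ssum (drop (j - 1) gs) (drop (j - 1) fs) (x # drop j ns));
               Fj = (\<lambda>x. of_nat x powr (- s) *
                      gconv (gs ! (j - 2)) Gj (\<lambda>y. of_nat y powr s * (fs ! (j - 2)) y) x)
           in Ssum (take (j - 2) gs) (take (j - 2) fs @ [Fj]) (take (j - 1) ns))))"
  proof -
  obtain g gs' where gs: "gs = g # gs'" using assms(1,2) by (cases gs) auto
  obtain f fs' where fs: "fs = f # fs'" using assms(4) by (cases fs) auto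
  obtain n0 ns1 where ns0: "ns = n0 # ns1" using assms(5) by (cases ns) auto
  obtain n1 rest where ns1: "ns1 = n1 # rest" using assms(1,5) ns0 by (cases ns1) auto
  have ns: "ns = n0 # n1 # rest" by (simp add: ns0 ns1)
  have g: "1 \<le> g" using assms(1,3) by (auto simp: gs)
  have gs'1: "\<forall>i<length gs'. 1 \<le> gs' ! i"
  proof (intro allI impI)
    fix i assume "i < length gs'"
    hence "Suc i < m" using assms(2) by (simp add: gs)
    with assms(3) have "1 \<le> gs ! Suc i" by blast
    thus "1 \<le> gs' ! i" by (simp add: gs)
  qed
  have "1 \<le> ns ! 1" using assms(1,6) by auto
  hence n1: "1 \<le> n1" by (simp add: ns)
  have n0: "1 \<le> ns ! 0" using assms(6) by auto
  have P1: "ereal (Re s) > abs_abscissa (fs ! 0) \<longrightarrow>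
      (\<lambda>n. Ssum gs fs (ns[0 := Suc n]) * of_nat (Suc n) powr (- s)) sums
        (Lser s (fs ! 0) *
          (let G2 = (\<lambda>x. Ssum (drop 1 gs) (drop 1 fs) (x # drop 2 ns));
               F1 = (\<lambda>x. of_nat x powr (- s) * gconv (gs ! 0) G2 (\<lambda>y. of_nat y powr s) x)
           in F1 (ns ! 1)))"
  proof
    assume ab: "ereal (Re s) > abs_abscissa (fs ! 0)"
    hence ab': "ereal (Re s) > abs_abscissa f" by (simp add: fs)
    from part1[OF g gs'1 n1 ab', of fs' rest] show "(\<lambda>n. Ssum gs fs (ns[0 := Suc n]) * of_nat (Suc n) powr (- s)) sums
        (Lser s (fs ! 0) *
          (let G2 = (\<lambda>x. Ssum (drop 1 gs) (drop 1 fs) (x # drop 2 ns));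
               F1 = (\<lambda>x. of_nat x powr (- s) * gconv (gs ! 0) G2 (\<lambda>y. of_nat y powr s) x)
           in F1 (ns ! 1)))"
      by (simp add: gs fs ns Let_def)
  qed
  have P2: "\<forall>j. 2 \<le> j \<and> j \<le> m + 1 \<and> 1 < Re s \<longrightarrow>
      (\<lambda>n. Ssum gs fs (ns[j - 1 := Suc n]) * of_nat (Suc n) powr (- s)) sums
        (zeta s *
          (let Gj = (\<lambda>x. Ssum (drop (j - 1) gs) (drop (j - 1) fs) (x # drop j ns));
               Fj = (\<lambda>x. of_nat x powr (- s) *
                      gconv (gs ! (j - 2)) Gj (\<lambda>y. of_nat y powr s * (fs ! (j - 2)) y) x)
           in Ssum (take (j - 2) gs) (take (j - 2) fs @ [Fj]) (take (j - 1) ns)))"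
  proof (intro allI impI)
    fix j assume j: "2 \<le> j \<and> j \<le> m + 1 \<and> 1 < Re s"
    define p where "p = j - 2"
    have jp: "j = Suc (Suc p)" using j unfolding p_def by linarith
    have "p < length gs" "Suc p < length ns" "length fs = Suc (length gs)"
      using j assms(2,4,5) by (auto simp: p_def)
    from part2[of s p gs ns fs, OF _ this assms(3)[folded assms(2)] n0] j
    show "(\<lambda>n. Ssum gs fs (ns[j - 1 := Suc n]) * of_nat (Suc n) powr (- s)) sums
        (zeta s *
          (let Gj = (\<lambda>x. Ssum (drop (j - 1) gs) (drop (j - 1) fs) (x # drop j ns));
               Fj = (\<lambda>x. of_nat x powr (- s) *
                      gconv (gs ! (j - 2)) Gj (\<lambda>y. of_nat y powr s * (fs ! (j - 2)) y) x)
           in Ssum (take (j - 2) gs) (take (j - 2) fs @ [Fj]) (take (j - 1) ns)))"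
      by (simp add: jp Let_def)
  qed
  from P1 P2 show ?thesis by blast
qed

end
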